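(* Let $0\le\beta_1\le\dots\le\beta_n$ be reals and $\ell\in\{1,\dots,n\}$. Then: 1. For each integer $d\ge0$ there is an $(\ell,\frac{2d}{\ell})$-set $I$ with $|I|=2d$. 2. For each integer $h$ with $0\le h\le\frac{\ell+1}{2}$ there is an $(\ell,1-\frac{2h}{\ell(\ell+1)})$-set $I$ with $\ell-1\le|I|\le\ell$. 3. For each integer $k\ge1$ and each $h\in\{0,1,\dots,\ell\}$ there is an $(\ell,k+\frac{2h}{\ell(\ell+1)})$-set $I$ with $k\ell+\lfloor\frac{2h}{\ell+1}\rfloor\le|I|\le k\ell+\lceil\frac{2h}{\ell+1}\rceil$. 4. For each integer $d\ge1$ and each $h\in\{0,1,\dots,\ell\}$ there is an $(\ell,\frac{2d}{\ell}+\frac{2h}{\ell(\ell+1)})$-set $I$ with $|I|\le 2d+2$. 5. If $\ell\le n-1$, then for each integer $d\ge0$ there is an $\ell$-set $I$ with $|I|=2d$, $\Sigma(I)\ge\ell d$, and $\sigma(I,\ell)\le\frac{2d\,t_{\ell+1}}{\ell+1}$.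
   Context: Set $\beta_0=0$. For $\ell=1,\dots,n$, let $t_\ell=\sum_{i=1}^{\ell}\beta_{n-\ell+i}$, the sum of the $\ell$ largest $\beta_i$. An $\ell$-set is a finite multiset of elements of $\{0,1,\dots,\ell\}$. For a multiset $I$, $|I|$ is its cardinality and $\Sigma(I)$ the sum of its elements, both counting multiplicity. For an $\ell$-set $I$, $\sigma(I,\ell)=\sum_{i\in I}\beta_{n-\ell+i}$, counting multiplicity. For a real $q>0$, an $(\ell,q)$-set is an $\ell$-set $I$ with $\Sigma(I)\ge\frac{q\ell(\ell+1)}2$ and $\sigma(I,\ell)\le q\,t_\ell$. *)

theory Defs
  imports "HOL-Analysis.Analysis" "HOL-Library.Multiset"
begin

(* beta is given on indices 1..n; the convention beta_0 = 0 is built in *)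
definition bt :: "(nat \<Rightarrow> real) \<Rightarrow> nat \<Rightarrow> real" where
  "bt \<beta> i = (if i = 0 then 0 else \<beta> i)"

(* t_l = sum of the l largest beta_i *)
definition tl_sum :: "(nat \<Rightarrow> real) \<Rightarrow> nat \<Rightarrow> nat \<Rightarrow> real" where
  "tl_sum \<beta> n l = (\<Sum>i=1..l. bt \<beta> (n - l + i))"

definition is_lset :: "nat \<Rightarrow> nat multiset \<Rightarrow> bool" where
  "is_lset l I \<longleftrightarrow> set_mset I \<subseteq> {0..l}"

definition Sig :: "nat multiset \<Rightarrow> nat" where
  "Sig I = sum_mset I"

definition sigma_l :: "(nat \<Rightarrow> real) \<Rightarrow> nat \<Rightarrow> nat multiset \<Rightarrow> nat \<Rightarrow> real" where
  "sigma_l \<beta> n I l = (\<Sum>i\<in>#I. bt \<beta> (n - l + i))"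

definition is_lqset :: "(nat \<Rightarrow> real) \<Rightarrow> nat \<Rightarrow> nat \<Rightarrow> real \<Rightarrow> nat multiset \<Rightarrow> bool" where
  "is_lqset \<beta> n l q I \<longleftrightarrow> is_lset l I \<and>
     real (Sig I) \<ge> q * real l * (real l + 1) / 2 \<and>
     sigma_l \<beta> n I l \<le> q * tl_sum \<beta> n l"

end

theory Submission
  imports Defs
begin


lemma exists_le_avg:
  fixes f :: "'a \<Rightarrow> real"
  assumes fin: "finite A" and ne: "A \<noteq> {}"
  shows "\<exists>x\<in>A. real (card A) * f x \<le> sum f A"
proof (rule ccontr)
  assume "\<not> ?thesis"
  then have lt: "\<forall>x\<in>A. sum f A / real (card A) < f x"
    using fin ne by (auto simp: not_le field_simps card_gt_0_iff)
  have "(\<Sum>x\<in>A. sum f A / real (card A)) < sum f A"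
    using sum_strict_mono[OF fin ne, of "\<lambda>_. sum f A / real (card A)" f] lt by auto
  moreover have "(\<Sum>x\<in>A. sum f A / real (card A)) = sum f A"
    using fin ne by (simp add: card_gt_0_iff)
  ultimately show False by simp
qed

lemma bottom_set_exists:
  fixes g :: "'a \<Rightarrow> real"
  assumes fin: "finite A"
  shows "H \<le> card A \<Longrightarrow> \<exists>S\<subseteq>A. card S = H \<and> (\<forall>x\<in>S. \<forall>y\<in>A-S. g x \<le> g y)"
proof (induction H)
  case 0
  show ?case by (intro exI[of _ "{}"]) auto
next
  case (Suc H)
  then obtain S where S: "S \<subseteq> A" "card S = H" "\<forall>x\<in>S. \<forall>y\<in>A-S. g x \<le> g y" by auto
  have finS: "finite S" using fin S(1) finite_subset by blast
  have fin2: "finite (A - S)" using fin by auto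
  have ne: "A - S \<noteq> {}"
  proof
    assume "A - S = {}"
    then have "A = S" using S(1) by blast
    then show False using Suc.prems S(2) by simp
  qed
  have "Min (g ` (A - S)) \<in> g ` (A - S)" using fin2 ne by (intro Min_in) auto
  then obtain y0 where y0: "y0 \<in> A - S" "g y0 = Min (g ` (A - S))" by auto
  have y0min: "\<forall>y\<in>A-S. g y0 \<le> g y" using y0(2) fin2 by (simp add: Min_le)
  show ?case
  proof (intro exI[of _ "insert y0 S"] conjI)
    show "insert y0 S \<subseteq> A" using y0(1) S(1) by auto
    show "card (insert y0 S) = Suc H" using y0(1) finS S(2) by simp
    show "\<forall>x\<in>insert y0 S. \<forall>y\<in>A - insert y0 S. g x \<le> g y"
      using S(3) y0min by auto
  qed
qed

lemma round_lemma:
  fixes g p :: "'a \<Rightarrow> real"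
  assumes fin: "finite A" and p01: "\<forall>x\<in>A. 0 \<le> p x \<and> p x \<le> 1" and sp: "sum p A = real H"
  shows "\<exists>S\<subseteq>A. card S = H \<and> sum g S \<le> (\<Sum>x\<in>A. p x * g x)"
proof -
  have "sum p A \<le> (\<Sum>x\<in>A. 1)" using p01 by (intro sum_mono) auto
  then have "H \<le> card A" using sp by simp
  then obtain S where S: "S \<subseteq> A" "card S = H" "\<forall>x\<in>S. \<forall>y\<in>A-S. g x \<le> g y"
    using bottom_set_exists[OF fin] by blast
  have finS: "finite S" using fin S(1) finite_subset by blast
  show ?thesis
  proof (cases "S = {}")
    case True
    then have H0: "H = 0" using S(2) by simp
    have "\<forall>x\<in>A. p x = 0" using sum_nonneg_eq_0_iff[OF fin, of p] p01 sp H0 by auto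
    then show ?thesis using True S H0 by (intro exI[of _ S]) auto
  next
    case False
    define th where "th = Max (g ` S)"
    have up: "\<forall>x\<in>S. g x \<le> th" using finS th_def by auto
    have "th \<in> g ` S" unfolding th_def using finS False by (intro Max_in) auto
    then have lo: "\<forall>y\<in>A-S. th \<le> g y" using S(3) by auto
    have split: "sum p A = sum p S + sum p (A - S)"
      using sum.subset_diff[OF S(1) fin, of p] by simp
    have split2: "(\<Sum>x\<in>A. p x * g x) = (\<Sum>x\<in>S. p x * g x) + (\<Sum>x\<in>A-S. p x * g x)"
      using sum.subset_diff[OF S(1) fin, of "\<lambda>x. p x * g x"] by simp
    have e1: "sum g S = (\<Sum>x\<in>S. p x * g x) + (\<Sum>x\<in>S. (1 - p x) * g x)"
      by (simp add: sum.distrib[symmetric] algebra_simps)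
    have e2: "(\<Sum>x\<in>S. (1 - p x) * g x) \<le> (\<Sum>x\<in>S. (1 - p x) * th)"
      using up p01 S(1) by (intro sum_mono mult_left_mono) auto
    have e3: "(\<Sum>x\<in>S. (1 - p x) * th) = (real H - sum p S) * th"
      using S(2) by (simp add: sum_distrib_right[symmetric] sum_subtractf)
    have e4: "(real H - sum p S) * th = (\<Sum>x\<in>A-S. p x * th)"
      using split sp by (simp add: sum_distrib_right[symmetric])
    have e5: "(\<Sum>x\<in>A-S. p x * th) \<le> (\<Sum>x\<in>A-S. p x * g x)"
      using lo p01 by (intro sum_mono mult_left_mono) auto
    show ?thesis using S e1 e2 e3 e4 e5 split2 by (intro exI[of _ S]) auto
  qed
qed

lemma round_lemma_pos:
  fixes g p :: "'a \<Rightarrow> real"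
  assumes fin: "finite A" and p01: "\<forall>x\<in>A. 0 \<le> p x \<and> p x \<le> 1" and sp: "sum p A = real H"
  shows "\<exists>S\<subseteq>A. card S = H \<and> (\<forall>x\<in>S. 0 < p x) \<and> sum g S \<le> (\<Sum>x\<in>A. p x * g x)"
proof -
  define A' where "A' = {x\<in>A. 0 < p x}"
  have finA': "finite A'" using fin A'_def by auto
  have s1: "sum p A' = sum p A"
    using fin p01 unfolding A'_def by (intro sum.mono_neutral_left) auto
  have s2: "(\<Sum>x\<in>A'. p x * g x) = (\<Sum>x\<in>A. p x * g x)"
    using fin p01 unfolding A'_def by (intro sum.mono_neutral_left) auto
  obtain S where "S \<subseteq> A'" "card S = H" "sum g S \<le> (\<Sum>x\<in>A'. p x * g x)"
    using round_lemma[OF finA', of p H g] p01 s1 sp unfolding A'_def by auto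
  then show ?thesis using s2 unfolding A'_def by (intro exI[of _ S]) auto
qed



definition Nset :: "nat \<Rightarrow> (nat \<Rightarrow> nat) \<Rightarrow> nat multiset" where
  "Nset L N = (\<Sum>m\<in>{1..L}. replicate_mset (N m - N (Suc m)) m)"

lemma Nset_sum:
  fixes f :: "nat \<Rightarrow> 'a::comm_semiring_1"
  shows "(\<Sum>x\<in>#Nset L N. f x) = (\<Sum>m\<in>{1..L}. of_nat (N m - N (Suc m)) * f m)"
  unfolding Nset_def by (induction L) auto

lemma Nset_set: "set_mset (Nset L N) \<subseteq> {1..L}"
  unfolding Nset_def by (subst set_mset_sum) auto

lemma Nset_size: "size (Nset L N) = (\<Sum>m\<in>{1..L}. N m - N (Suc m))"
  unfolding Nset_def by (induction L) auto

lemma abel: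
  fixes a :: "nat \<Rightarrow> real"
  assumes a0: "a 0 = 0"
  shows "(\<forall>m. 1 \<le> m \<and> m \<le> L \<longrightarrow> N (Suc m) \<le> N m) \<Longrightarrow>
    (\<Sum>m\<in>{1..L}. real (N m - N (Suc m)) * a m) =
     (\<Sum>m\<in>{1..L}. (a m - a (m - 1)) * real (N m)) - a L * real (N (Suc L))"
proof (induction L)
  case 0
  then show ?case using a0 by simp
next
  case (Suc L)
  then have IH: "(\<Sum>m\<in>{1..L}. real (N m - N (Suc m)) * a m) =
     (\<Sum>m\<in>{1..L}. (a m - a (m - 1)) * real (N m)) - a L * real (N (Suc L))" by auto
  have le: "N (Suc (Suc L)) \<le> N (Suc L)" using Suc.prems by auto
  show ?case using IH le by (simp add: of_nat_diff algebra_simps)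
qed

lemma gauss_real: "(\<Sum>m\<in>{1..l}. real (l + 1 - m)) = real l * (real l + 1) / 2"
proof (induction l)
  case 0 then show ?case by simp
next
  case (Suc l)
  have "(\<Sum>m\<in>{1..Suc l}. real (Suc l + 1 - m)) = (\<Sum>m\<in>{1..l}. real (l + 1 - m) + 1) + 1"
    by (simp add: Suc_diff_le)
  also have "\<dots> = real l * (real l + 1) / 2 + real l + 1" unfolding sum.distrib Suc.IH by simp
  also have "\<dots> = real (Suc l) * (real (Suc l) + 1) / 2" by (simp add: field_simps)
  finally show ?case .
qed



definition aa :: "(nat \<Rightarrow> real) \<Rightarrow> nat \<Rightarrow> nat \<Rightarrow> nat \<Rightarrow> real" where
  "aa \<beta> n l m = (if m = 0 then 0 else bt \<beta> (n - l + m))"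

definition gg :: "(nat \<Rightarrow> real) \<Rightarrow> nat \<Rightarrow> nat \<Rightarrow> nat \<Rightarrow> real" where
  "gg \<beta> n l m = aa \<beta> n l m - aa \<beta> n l (m - 1)"

lemma profile:
  assumes mono: "\<forall>m. 1 \<le> m \<and> m \<le> l \<longrightarrow> N (Suc m) \<le> N m" and top: "N (Suc l) = 0"
  shows "is_lset l (Nset l N)"
    and "1 \<le> l \<Longrightarrow> size (Nset l N) = N 1"
    and "real (Sig (Nset l N)) = (\<Sum>m\<in>{1..l}. real (N m))"
    and "sigma_l \<beta> n (Nset l N) l = (\<Sum>m\<in>{1..l}. gg \<beta> n l m * real (N m))"
proof -
  show "is_lset l (Nset l N)" unfolding is_lset_def using Nset_set by fastforce
next
  assume l1: "1 \<le> l"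
  define c :: "nat \<Rightarrow> real" where "c = (\<lambda>m. if m = 0 then 0 else 1)"
  have "real (size (Nset l N)) = (\<Sum>x\<in>#Nset l N. (1::real))" by simp
  also have "\<dots> = (\<Sum>m\<in>{1..l}. real (N m - N (Suc m)) * c m)"
    by (subst Nset_sum) (intro sum.cong, auto simp: c_def)
  also have "\<dots> = (\<Sum>m\<in>{1..l}. (c m - c (m - 1)) * real (N m)) - c l * real (N (Suc l))"
    by (rule abel) (use mono in \<open>auto simp: c_def\<close>)
  also have "\<dots> = (\<Sum>m\<in>{1..l}. (c m - c (m - 1)) * real (N m))" using top by simp
  also have "\<dots> = (\<Sum>m\<in>{1..l}. (if m = 1 then real (N m) else 0))"
    by (rule sum.cong) (auto simp: c_def)
  also have "\<dots> = real (N 1)" using l1 by (simp add: sum.delta)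
  finally show "size (Nset l N) = N 1" by linarith
next
  have "real (Sig (Nset l N)) = (\<Sum>x\<in>#Nset l N. real x)" unfolding Sig_def by simp
  also have "\<dots> = (\<Sum>m\<in>{1..l}. real (N m - N (Suc m)) * real m)" by (rule Nset_sum)
  also have "\<dots> = (\<Sum>m\<in>{1..l}. (real m - real (m - 1)) * real (N m)) - real l * real (N (Suc l))"
    by (rule abel[where a = real]) (use mono in auto)
  also have "\<dots> = (\<Sum>m\<in>{1..l}. (real m - real (m - 1)) * real (N m))" using top by simp
  also have "\<dots> = (\<Sum>m\<in>{1..l}. real (N m))"
    by (rule sum.cong) (auto simp: of_nat_diff)
  finally show "real (Sig (Nset l N)) = (\<Sum>m\<in>{1..l}. real (N m))" .
next
  have "sigma_l \<beta> n (Nset l N) l = (\<Sum>x\<in>#Nset l N. bt \<beta> (n - l + x))" unfolding sigma_l_def by simp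
  also have "\<dots> = (\<Sum>m\<in>{1..l}. real (N m - N (Suc m)) * bt \<beta> (n - l + m))" by (rule Nset_sum)
  also have "\<dots> = (\<Sum>m\<in>{1..l}. real (N m - N (Suc m)) * aa \<beta> n l m)"
    by (intro sum.cong) (auto simp: aa_def)
  also have "\<dots> = (\<Sum>m\<in>{1..l}. (aa \<beta> n l m - aa \<beta> n l (m - 1)) * real (N m)) - aa \<beta> n l l * real (N (Suc l))"
    by (rule abel) (use mono in \<open>auto simp: aa_def\<close>)
  also have "\<dots> = (\<Sum>m\<in>{1..l}. gg \<beta> n l m * real (N m))"
    using top by (simp add: gg_def)
  finally show "sigma_l \<beta> n (Nset l N) l = (\<Sum>m\<in>{1..l}. gg \<beta> n l m * real (N m))" .
qed

lemma tl_abel: "tl_sum \<beta> n l = (\<Sum>m\<in>{1..l}. gg \<beta> n l m * real (l + 1 - m))"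
proof -
  have "tl_sum \<beta> n l = (\<Sum>m\<in>{1..l}. real ((\<lambda>m. l + 1 - m) m - (\<lambda>m. l + 1 - m) (Suc m)) * aa \<beta> n l m)"
    unfolding tl_sum_def by (intro sum.cong) (auto simp: aa_def)
  also have "\<dots> = (\<Sum>m\<in>{1..l}. (aa \<beta> n l m - aa \<beta> n l (m - 1)) * real ((\<lambda>m. l + 1 - m) m)) - aa \<beta> n l l * real ((\<lambda>m. l + 1 - m) (Suc l))"
    by (rule abel) (auto simp: aa_def)
  also have "\<dots> = (\<Sum>m\<in>{1..l}. gg \<beta> n l m * real (l + 1 - m))" by (simp add: gg_def)
  finally show ?thesis .
qed

lemma gg_nonneg:
  assumes nonneg: "0 \<le> \<beta> 1"
    and mono: "\<And>i j. 1 \<le> i \<Longrightarrow> i \<le> j \<Longrightarrow> j \<le> n \<Longrightarrow> \<beta> i \<le> \<beta> j"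
    and l: "l \<le> n" and m: "1 \<le> m" "m \<le> l"
  shows "0 \<le> gg \<beta> n l m"
proof (cases "m = 1")
  case True
  have "n - l + 1 \<le> n" using l m by linarith
  then show ?thesis using True nonneg mono[of 1 "n - l + 1"] l m by (auto simp: gg_def aa_def bt_def)
next
  case False
  then show ?thesis using mono[of "n - l + (m - 1)" "n - l + m"] l m
    by (auto simp: gg_def aa_def bt_def)
qed



lemma sigma_union: "sigma_l \<beta> n (A + B) l = sigma_l \<beta> n A l + sigma_l \<beta> n B l"
  unfolding sigma_l_def by simp

lemma sigma_rep: "sigma_l \<beta> n (replicate_mset d x) l = real d * bt \<beta> (n - l + x)"
  unfolding sigma_l_def by simp

lemma sigma_pair: "sigma_l \<beta> n {#x, y#} l = bt \<beta> (n - l + x) + bt \<beta> (n - l + y)"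
  unfolding sigma_l_def by simp

lemma Sig_union: "Sig (A + B) = Sig A + Sig B" unfolding Sig_def by simp

lemma Sig_rep: "Sig (replicate_mset d x) = d * x" unfolding Sig_def by simp

lemma part1:
  assumes l: "1 \<le> l"
  shows "\<exists>I. is_lqset \<beta> n l (2 * real d / real l) I \<and> size I = 2 * d"
proof -
  define f where "f i = bt \<beta> (n - l + i) + bt \<beta> (n - l + (l + 1 - i))" for i
  have s2: "(\<Sum>i\<in>{1..l}. bt \<beta> (n - l + (l + 1 - i))) = tl_sum \<beta> n l"
    unfolding tl_sum_def by (subst (2) sum.atLeastAtMost_rev) simp
  have sf: "sum f {1..l} = 2 * tl_sum \<beta> n l"
    unfolding f_def sum.distrib s2 by (simp add: tl_sum_def)
  obtain i where i: "i \<in> {1..l}" "real (card {1..l}) * f i \<le> sum f {1..l}"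
    using exists_le_avg[of "{1..l}" f] l by auto
  have fi: "real l * f i \<le> 2 * tl_sum \<beta> n l" using i sf by simp
  define I where "I = replicate_mset d i + replicate_mset d (l + 1 - i)"
  have lpos: "real l > 0" using l by simp
  have "is_lset l I" unfolding I_def is_lset_def using i by auto
  moreover have "real (Sig I) = real d * (real l + 1)"
  proof -
    have "i + (l + 1 - i) = l + 1" using i by auto
    then have "Sig I = d * (l + 1)" unfolding I_def Sig_union Sig_rep by (metis add_mult_distrib2)
    then show ?thesis by (simp add: algebra_simps)
  qed
  moreover have "sigma_l \<beta> n I l = real d * f i"
    unfolding I_def sigma_union sigma_rep f_def by (simp add: algebra_simps)
  moreover have "real d * f i \<le> 2 * real d / real l * tl_sum \<beta> n l"
  proof -
    have "real d * (real l * f i) \<le> real d * (2 * tl_sum \<beta> n l)" using fi by (intro mult_left_mono) auto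
    then show ?thesis using lpos by (simp add: field_simps)
  qed
  moreover have "size I = 2 * d" unfolding I_def by simp
  ultimately show ?thesis unfolding is_lqset_def using lpos
    by (intro exI[of _ I]) (auto simp: field_simps)
qed

lemma part5:
  assumes l: "1 \<le> l" "l \<le> n - 1"
  shows "\<exists>I. is_lset l I \<and> size I = 2 * d \<and> real (Sig I) \<ge> real l * real d
               \<and> sigma_l \<beta> n I l \<le> 2 * real d * tl_sum \<beta> n (l + 1) / (real l + 1)"
proof -
  define f where "f i = bt \<beta> (n - l + i) + bt \<beta> (n - l + (l - i))" for i
  have tl: "tl_sum \<beta> n (l + 1) = (\<Sum>i\<in>{0..l}. bt \<beta> (n - l + i))"
  proof -
    have "tl_sum \<beta> n (l + 1) = (\<Sum>i\<in>{1..l+1}. bt \<beta> (n - l + (i - 1)))"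
      unfolding tl_sum_def using l by (intro sum.cong) auto
    also have "\<dots> = (\<Sum>i\<in>{0..l}. bt \<beta> (n - l + i))"
      using sum.shift_bounds_cl_Suc_ivl[of "\<lambda>i. bt \<beta> (n - l + (i - 1))" 0 l] by simp
    finally show ?thesis .
  qed
  have s2: "(\<Sum>i\<in>{0..l}. bt \<beta> (n - l + (l - i))) = (\<Sum>i\<in>{0..l}. bt \<beta> (n - l + i))"
    by (subst (2) sum.atLeastAtMost_rev) simp
  have sf: "sum f {0..l} = 2 * tl_sum \<beta> n (l + 1)"
    unfolding f_def sum.distrib s2 tl by simp
  obtain i where i: "i \<in> {0..l}" "real (card {0..l}) * f i \<le> sum f {0..l}"
    using exists_le_avg[of "{0..l}" f] by auto
  have fi: "(real l + 1) * f i \<le> 2 * tl_sum \<beta> n (l + 1)" using i sf by (simp add: algebra_simps)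
  define I where "I = replicate_mset d i + replicate_mset d (l - i)"
  have "is_lset l I" unfolding I_def is_lset_def using i by auto
  moreover have "real (Sig I) = real d * real l"
  proof -
    have "i + (l - i) = l" using i by auto
    then have "Sig I = d * l" unfolding I_def Sig_union Sig_rep by (metis add_mult_distrib2)
    then show ?thesis by simp
  qed
  moreover have "sigma_l \<beta> n I l = real d * f i"
    unfolding I_def sigma_union sigma_rep f_def by (simp add: algebra_simps)
  moreover have "real d * f i \<le> 2 * real d * tl_sum \<beta> n (l + 1) / (real l + 1)"
  proof -
    have "real d * ((real l + 1) * f i) \<le> real d * (2 * tl_sum \<beta> n (l + 1))" using fi by (intro mult_left_mono) auto
    then show ?thesis by (simp add: field_simps)
  qed
  moreover have "size I = 2 * d" unfolding I_def by simp
  ultimately show ?thesis by (intro exI[of _ I]) (auto simp: field_simps)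
qed



lemma sigma_filter0: "sigma_l \<beta> n (filter_mset (\<lambda>x. x \<noteq> 0) M) l = (\<Sum>x\<in>#M. aa \<beta> n l x)"
  unfolding sigma_l_def by (induction M) (auto simp: aa_def)

lemma Sig_filter0: "Sig (filter_mset (\<lambda>x. x \<noteq> 0) M) = Sig M"
  unfolding Sig_def by (induction M) auto

lemma qcancel:
  assumes "1 \<le> l"
  shows "(a / real l + 2 * real h / (real l * (real l + 1))) * real l * (real l + 1) / 2
         = a * (real l + 1) / 2 + real h"
proof -
  have ne: "real l * (real l + 1) \<noteq> 0" and lne: "real l \<noteq> 0" using assms by auto
  have e1: "(2 * real h / (real l * (real l + 1))) * (real l * (real l + 1)) = 2 * real h" using ne by simp
  have e2: "(a / real l) * (real l * (real l + 1)) = a * (real l + 1)" using lne by simp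
  have "(a / real l + 2 * real h / (real l * (real l + 1))) * real l * (real l + 1) / 2
      = ((a / real l) * (real l * (real l + 1)) + (2 * real h / (real l * (real l + 1))) * (real l * (real l + 1))) / 2"
    by (simp add: algebra_simps)
  also have "\<dots> = a * (real l + 1) / 2 + real h" unfolding e1 e2 by simp
  finally show ?thesis .
qed

lemma part4:
  assumes l: "1 \<le> l" and d: "1 \<le> d" and h: "h \<le> l"
  shows "\<exists>I. is_lqset \<beta> n l (2 * real d / real l + 2 * real h / (real l * (real l + 1))) I
               \<and> size I \<le> 2 * d + 2"
proof -
  define t where "t = tl_sum \<beta> n l"
  define b where "b i = bt \<beta> (n - l + i)" for i
  define T where "T = (2 / real l + 2 * real h / (real l * (real l + 1))) * t"
  have lpos: "real l > 0" using l by simp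
  define f where "f i = b i + b (l + 1 - i)" for i
  have s2: "(\<Sum>i\<in>{1..l}. b (l + 1 - i)) = t"
    unfolding t_def tl_sum_def b_def by (subst (2) sum.atLeastAtMost_rev) simp
  have sf: "sum f {1..l} = 2 * t"
    unfolding f_def sum.distrib s2 by (simp add: t_def tl_sum_def b_def)
  obtain i0 where i0: "i0 \<in> {1..l}" "real (card {1..l}) * f i0 \<le> sum f {1..l}"
    using exists_le_avg[of "{1..l}" f] l by auto
  have fi0: "real l * f i0 \<le> 2 * t" using i0 sf by simp
  define P where "P = {#i0, l + 1 - i0#}"
  have sP: "sigma_l \<beta> n P l = f i0" unfolding P_def sigma_pair f_def b_def by simp
  have SP: "Sig P = l + 1" unfolding P_def Sig_def using i0 by auto
  have lP: "set_mset P \<subseteq> {0..l}" unfolding P_def using i0 by auto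
  define B where "B = (\<Sum>i\<in>{1..h}. b i)"
  define C where "C = (\<Sum>i\<in>{h+1..l}. b i)"
  have tBC: "t = B + C"
  proof -
    have "{1..l} = {1..h} \<union> {h+1..l}" using h by auto
    then show ?thesis unfolding t_def tl_sum_def B_def C_def b_def
      by (simp add: sum.union_disjoint)
  qed
  define R where "R i = b i + b (l + 1 + h - i)" for i
  have sR: "sum R {h+1..l} = 2 * C"
  proof -
    have "(\<Sum>i\<in>{h+1..l}. b (l + 1 + h - i)) = C"
      unfolding C_def by (subst (2) sum.atLeastAtMost_rev) (simp add: algebra_simps)
    then show ?thesis unfolding R_def sum.distrib C_def by simp
  qed
  define Q where "Q j = aa \<beta> n l j + aa \<beta> n l (h - j)" for j
  have sQ: "sum Q {0..h} = 2 * B"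
  proof -
    have e1: "(\<Sum>j\<in>{0..h}. aa \<beta> n l (h - j)) = (\<Sum>j\<in>{0..h}. aa \<beta> n l j)"
      by (subst (2) sum.atLeastAtMost_rev) simp
    have e2: "(\<Sum>j\<in>{0..h}. aa \<beta> n l j) = B"
    proof -
      have "(\<Sum>j\<in>{0..h}. aa \<beta> n l j) = aa \<beta> n l 0 + (\<Sum>j\<in>{1..h}. aa \<beta> n l j)"
        by (simp add: sum.atLeast_Suc_atMost)
      also have "\<dots> = B" unfolding B_def b_def by (simp add: aa_def)
      finally show ?thesis .
    qed
    show ?thesis unfolding Q_def sum.distrib e1 e2 by simp
  qed
  have key: "(\<exists>i\<in>{h+1..l}. R i \<le> T) \<or> (\<exists>j\<in>{0..h}. Q j + f i0 \<le> T)"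
  proof (rule ccontr)
    assume "\<not> ?thesis"
    then have A1: "\<forall>i\<in>{h+1..l}. T < R i" and A2: "\<forall>j\<in>{0..h}. T < Q j + f i0" by (auto simp: not_le)
    have "(\<Sum>i\<in>{h+1..l}. T) \<le> sum R {h+1..l}" using A1 by (intro sum_mono) (auto intro: less_imp_le)
    then have i1: "real (l - h) * T \<le> 2 * C" using sR by simp
    have "(\<Sum>j\<in>{0..h}. T) < (\<Sum>j\<in>{0..h}. Q j + f i0)" using A2 by (intro sum_strict_mono) auto
    then have i2: "real (h + 1) * T < 2 * B + real (h + 1) * f i0" using sQ by (simp add: sum.distrib)
    have i3: "real (h + 1) * (real l * f i0) \<le> real (h + 1) * (2 * t)" using fi0 by (intro mult_left_mono) auto
    have "real (l - h) + real (h + 1) = real l + 1" using h by (simp add: of_nat_diff)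
    then have "(real l + 1) * T < 2 * C + 2 * B + real (h + 1) * f i0" using i1 i2 by (simp add: algebra_simps)
    then have "real l * ((real l + 1) * T) < real l * (2 * C + 2 * B + real (h + 1) * f i0)"
      using lpos by (rule mult_strict_left_mono)
    also have "\<dots> = real l * (2 * t) + real (h + 1) * (real l * f i0)"
      using tBC by (simp add: algebra_simps)
    also have "\<dots> \<le> real l * (2 * t) + real (h + 1) * (2 * t)" using i3 by simp
    finally have "real l * ((real l + 1) * T) < real l * (2 * t) + real (h + 1) * (2 * t)" .
    moreover have "real l * ((real l + 1) * T) = real l * (2 * t) + real (h + 1) * (2 * t)"
    proof -
      have ne: "real l * (real l + 1) \<noteq> 0" using lpos by simp
      have "real l * ((real l + 1) * T) = (real l * (real l + 1)) * (2 / real l * t) + (real l * (real l + 1)) * (2 * real h / (real l * (real l + 1))) * t"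
        unfolding T_def by (simp add: algebra_simps)
      also have "\<dots> = (real l + 1) * (2 * t) + 2 * real h * t"
      proof -
        have "(real l * (real l + 1)) * (2 / real l * t) = (real l + 1) * (2 * t)" using lpos by (simp add: field_simps)
        moreover have "(real l * (real l + 1)) * (2 * real h / (real l * (real l + 1))) = 2 * real h" using ne by simp
        ultimately show ?thesis by simp
      qed
      also have "\<dots> = real l * (2 * t) + real (h + 1) * (2 * t)" by (simp add: algebra_simps)
      finally show ?thesis .
    qed
    ultimately show False by simp
  qed
  define q where "q = 2 * real d / real l + 2 * real h / (real l * (real l + 1))"
  have qT: "q * t = real (d - 1) * (2 / real l) * t + T"
    unfolding q_def T_def using d lpos by (simp add: field_simps of_nat_diff)
  have Sgoal: "q * real l * (real l + 1) / 2 = real d * (real l + 1) + real h"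
    unfolding q_def using qcancel[OF l, of "2 * real d" h] by simp
  have fP: "real (d - 1) * f i0 \<le> real (d - 1) * (2 / real l) * t"
  proof -
    have "real (d - 1) * (real l * f i0) \<le> real (d - 1) * (2 * t)" using fi0 by (intro mult_left_mono) auto
    then show ?thesis using lpos by (simp add: field_simps)
  qed
  from key show ?thesis
  proof
    assume "\<exists>i\<in>{h+1..l}. R i \<le> T"
    then obtain i where i: "i \<in> {h+1..l}" "R i \<le> T" by auto
    define I where "I = replicate_mset (d - 1) i0 + replicate_mset (d - 1) (l + 1 - i0) + {#i, l + 1 + h - i#}"
    have lsI: "is_lset l I" unfolding I_def is_lset_def using i i0 by auto
    have "Sig I = (d - 1) * (l + 1) + (l + 1 + h)"
    proof -
      have "i0 + (l + 1 - i0) = l + 1" using i0 by auto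
      then have "(d - 1) * i0 + (d - 1) * (l + 1 - i0) = (d - 1) * (l + 1)" by (metis add_mult_distrib2)
      moreover have "i + (l + 1 + h - i) = l + 1 + h" using i by auto
      ultimately show ?thesis unfolding I_def Sig_union Sig_rep by (simp add: Sig_def)
    qed
    moreover have "(d - 1) * (l + 1) + (l + 1 + h) = d * (l + 1) + h" using d by (cases d) auto
    ultimately have "Sig I = d * (l + 1) + h" by simp
    then have "real (Sig I) = real d * (real l + 1) + real h" by (simp add: algebra_simps)
    moreover note lsI
    moreover have "sigma_l \<beta> n I l = real (d - 1) * f i0 + R i"
      unfolding I_def sigma_union sigma_rep sigma_pair f_def R_def b_def by (simp add: algebra_simps)
    moreover have "size I \<le> 2 * d + 2" unfolding I_def by simp
    ultimately show ?thesis unfolding is_lqset_def q_def[symmetric] t_def[symmetric] Sgoal qT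
      using i(2) fP by (intro exI[of _ I]) auto
  next
    assume "\<exists>j\<in>{0..h}. Q j + f i0 \<le> T"
    then obtain j where j: "j \<in> {0..h}" "Q j + f i0 \<le> T" by auto
    define I where "I = replicate_mset d i0 + replicate_mset d (l + 1 - i0) + filter_mset (\<lambda>x. x \<noteq> 0) {#j, h - j#}"
    have "is_lset l I" unfolding I_def is_lset_def using j i0 h by auto
    moreover have "Sig I = d * (l + 1) + h"
    proof -
      have "i0 + (l + 1 - i0) = l + 1" using i0 by auto
      then have "d * i0 + d * (l + 1 - i0) = d * (l + 1)" by (metis add_mult_distrib2)
      moreover have "j + (h - j) = h" using j by auto
      ultimately show ?thesis unfolding I_def Sig_union Sig_rep Sig_filter0 by (simp add: Sig_def)
    qed
    then have "real (Sig I) = real d * (real l + 1) + real h" by (simp add: algebra_simps)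
    moreover have "sigma_l \<beta> n I l = real (d - 1) * f i0 + (Q j + f i0)"
    proof -
      have "real d * f i0 = real (d - 1) * f i0 + f i0" using d by (simp add: of_nat_diff algebra_simps)
      then show ?thesis
        unfolding I_def sigma_union sigma_rep sigma_filter0 f_def Q_def b_def by (simp add: algebra_simps)
    qed
    moreover have "size I \<le> 2 * d + 2"
    proof -
      have "size (filter_mset (\<lambda>x. x \<noteq> 0) {#j, h - j#}) \<le> 2"
        using size_filter_mset_lesseq[of "\<lambda>x. x \<noteq> 0" "{#j, h - j#}"] by simp
      then show ?thesis unfolding I_def by simp
    qed
    ultimately show ?thesis unfolding is_lqset_def q_def[symmetric] t_def[symmetric] Sgoal qT
      using j(2) fP by (intro exI[of _ I]) auto
  qed
qed



lemma sum_if_subset: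
  fixes f :: "nat \<Rightarrow> real"
  assumes "finite A" "S \<subseteq> A"
  shows "(\<Sum>m\<in>A. if m \<in> S then f m else 0) = sum f S"
proof -
  have "A \<inter> S = S" using assms(2) by blast
  then show ?thesis using sum.inter_restrict[OF assms(1), of f S] by simp
qed

lemma p_sum:
  assumes "1 \<le> l"
  shows "(\<Sum>m\<in>{1..l}. 2 * real h * real (l + 1 - m) / (real l * (real l + 1))) = real h"
proof -
  have ne: "real l * (real l + 1) \<noteq> 0" using assms by auto
  have "(\<Sum>m\<in>{1..l}. 2 * real h * real (l + 1 - m) / (real l * (real l + 1)))
      = 2 * real h / (real l * (real l + 1)) * (\<Sum>m\<in>{1..l}. real (l + 1 - m))"
    by (simp add: sum_distrib_left sum_divide_distrib)
  also have "\<dots> = 2 * real h / (real l * (real l + 1)) * (real l * (real l + 1)) / 2"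
    unfolding gauss_real by simp
  also have "\<dots> = real h" using ne by simp
  finally show ?thesis .
qed

lemma p_tl:
  assumes "1 \<le> l"
  shows "(\<Sum>m\<in>{1..l}. gg \<beta> n l m * (2 * real h * real (l + 1 - m) / (real l * (real l + 1))))
     = 2 * real h / (real l * (real l + 1)) * tl_sum \<beta> n l"
  unfolding tl_abel sum_distrib_left
  by (intro sum.cong) (simp_all add: mult.commute mult.left_commute times_divide_eq_right times_divide_eq_left)

lemma part3:
  assumes l: "1 \<le> l" "l \<le> n" and k: "1 \<le> k" and h: "h \<le> l"
  shows "\<exists>I. is_lqset \<beta> n l (real k + 2 * real h / (real l * (real l + 1))) I
               \<and> int (k * l) + \<lfloor>2 * real h / (real l + 1)\<rfloor> \<le> int (size I)
               \<and> int (size I) \<le> int (k * l) + \<lceil>2 * real h / (real l + 1)\<rceil>"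
proof -
  define c where "c = 2 * real h / (real l * (real l + 1))"
  define p where "p m = 2 * real h * real (l + 1 - m) / (real l * (real l + 1))" for m
  define fl where "fl m = nat \<lfloor>p m\<rfloor>" for m
  define fr where "fr m = p m - real (fl m)" for m
  have lpos: "real l > 0" using l by simp
  have p0: "0 \<le> p m" for m unfolding p_def using lpos by simp
  have flp: "real (fl m) = of_int \<lfloor>p m\<rfloor>" for m unfolding fl_def using p0[of m] by simp
  have flint: "int (fl m) = \<lfloor>p m\<rfloor>" for m unfolding fl_def using p0[of m] by simp
  have fr01: "0 \<le> fr m \<and> fr m \<le> 1" for m
    unfolding fr_def flp using real_of_int_floor_add_one_ge[of "p m"] of_int_floor_le[of "p m"] by linarith
  have pmono: "p (Suc m) \<le> p m" for m
  proof -
    have "real (l + 1 - Suc m) \<le> real (l + 1 - m)" by simp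
    then show ?thesis unfolding p_def using lpos by (intro divide_right_mono mult_left_mono) auto
  qed
  have flmono: "fl (Suc m) \<le> fl m" for m unfolding fl_def using pmono[of m] by (intro nat_mono floor_mono)
  define F where "F = (\<Sum>m\<in>{1..l}. fl m)"
  have sp: "(\<Sum>m\<in>{1..l}. p m) = real h" unfolding p_def using p_sum[OF l(1)] by simp
  have sfr: "(\<Sum>m\<in>{1..l}. fr m) = real h - real F"
    unfolding fr_def F_def sum_subtractf sp by simp
  have "0 \<le> (\<Sum>m\<in>{1..l}. fr m)" using fr01 by (intro sum_nonneg) auto
  then have Fh: "F \<le> h" using sfr by simp
  have sfr2: "(\<Sum>m\<in>{1..l}. fr m) = real (h - F)" using sfr Fh by (simp add: of_nat_diff)
  obtain S where S: "S \<subseteq> {1..l}" "card S = h - F" "\<forall>m\<in>S. 0 < fr m"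
      "sum (gg \<beta> n l) S \<le> (\<Sum>m\<in>{1..l}. fr m * gg \<beta> n l m)"
    using round_lemma_pos[of "{1..l}" fr "h - F" "gg \<beta> n l"] fr01 sfr2 by auto
  define N where "N m = (if m \<le> l then k * (l + 1 - m) + fl m + (if m \<in> S then 1 else 0) else 0)" for m
  have Nmono: "\<forall>m. 1 \<le> m \<and> m \<le> l \<longrightarrow> N (Suc m) \<le> N m"
  proof (intro allI impI)
    fix m assume m: "1 \<le> m \<and> m \<le> l"
    show "N (Suc m) \<le> N m"
    proof (cases "Suc m \<le> l")
      case True
      have "l + 1 - m = Suc (l + 1 - Suc m)" using True by simp
      then have e: "k * (l + 1 - m) = k * (l + 1 - Suc m) + k" by simp
      have le1: "(if Suc m \<in> S then 1 else 0) \<le> k" using k by simp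
      have "k * (l + 1 - Suc m) + fl (Suc m) + (if Suc m \<in> S then 1 else 0)
            \<le> k * (l + 1 - m) + fl m + (if m \<in> S then 1 else 0)"
        unfolding e using le1 flmono[of m] by linarith
      then show ?thesis unfolding N_def using True m by simp
    next
      case False
      then show ?thesis unfolding N_def by auto
    qed
  qed
  have Ntop: "N (Suc l) = 0" unfolding N_def by simp
  define I where "I = Nset l N"
  note pr = profile[OF Nmono Ntop, folded I_def]
  have rN: "real (N m) = real k * real (l + 1 - m) + real (fl m) + (if m \<in> S then 1 else 0)" if "m \<in> {1..l}" for m
    using that unfolding N_def by auto
  have "real (Sig I) = (\<Sum>m\<in>{1..l}. real k * real (l + 1 - m) + real (fl m) + (if m \<in> S then 1 else 0))"
    unfolding pr(3) using rN by (intro sum.cong) simp_all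
  also have "\<dots> = (\<Sum>m\<in>{1..l}. real k * real (l + 1 - m)) + (\<Sum>m\<in>{1..l}. real (fl m)) + (\<Sum>m\<in>{1..l}. (if m \<in> S then 1 else 0))"
    by (simp only: sum.distrib)
  also have "\<dots> = real k * (real l * (real l + 1) / 2) + real F + real (card S)"
  proof -
    have e1: "(\<Sum>m\<in>{1..l}. real k * real (l + 1 - m)) = real k * (real l * (real l + 1) / 2)"
      by (simp only: sum_distrib_left[symmetric] gauss_real)
    have e2: "(\<Sum>m\<in>{1..l}. real (fl m)) = real F" unfolding F_def by simp
    have e3: "(\<Sum>m\<in>{1..l}. (if m \<in> S then 1 else 0)) = real (card S)"
      using sum_if_subset[of "{1..l}" S "\<lambda>_. 1"] S(1) by simp
    show ?thesis unfolding e1 e2 e3 ..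
  qed
  also have "\<dots> = real k * (real l * (real l + 1) / 2) + real h" using S(2) Fh by (simp add: of_nat_diff)
  finally have SigI: "real (Sig I) = real k * (real l * (real l + 1) / 2) + real h" .
  have ce: "c * (real l * (real l + 1)) = 2 * real h" unfolding c_def using lpos by simp
  have "(real k + c) * real l * (real l + 1) / 2 = real k * (real l * (real l + 1) / 2) + (c * (real l * (real l + 1))) / 2"
    by (simp add: field_simps)
  then have Sgoal: "(real k + c) * real l * (real l + 1) / 2 = real k * (real l * (real l + 1) / 2) + real h"
    unfolding ce by simp
  have "sigma_l \<beta> n I l = (\<Sum>m\<in>{1..l}. real k * (gg \<beta> n l m * real (l + 1 - m)) + gg \<beta> n l m * real (fl m) + (if m \<in> S then gg \<beta> n l m else 0))"
    unfolding pr(4)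
  proof (intro sum.cong refl)
    fix m assume m: "m \<in> {1..l}"
    show "gg \<beta> n l m * real (N m) = real k * (gg \<beta> n l m * real (l + 1 - m)) + gg \<beta> n l m * real (fl m) + (if m \<in> S then gg \<beta> n l m else 0)"
      unfolding rN[OF m] by (simp add: algebra_simps)
  qed
  also have "\<dots> = real k * tl_sum \<beta> n l + (\<Sum>m\<in>{1..l}. gg \<beta> n l m * real (fl m)) + sum (gg \<beta> n l) S"
  proof -
    have e1: "(\<Sum>m\<in>{1..l}. real k * (gg \<beta> n l m * real (l + 1 - m))) = real k * tl_sum \<beta> n l"
      unfolding tl_abel by (simp only: sum_distrib_left)
    have e3: "(\<Sum>m\<in>{1..l}. (if m \<in> S then gg \<beta> n l m else 0)) = sum (gg \<beta> n l) S"
      using sum_if_subset[of "{1..l}" S "gg \<beta> n l"] S(1) by simp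
    show ?thesis unfolding sum.distrib e1 e3 ..
  qed
  also have "\<dots> \<le> real k * tl_sum \<beta> n l + (\<Sum>m\<in>{1..l}. gg \<beta> n l m * real (fl m)) + (\<Sum>m\<in>{1..l}. fr m * gg \<beta> n l m)"
    using S(4) by simp
  also have "\<dots> = real k * tl_sum \<beta> n l + (\<Sum>m\<in>{1..l}. gg \<beta> n l m * p m)"
    unfolding fr_def by (simp add: sum.distrib[symmetric] algebra_simps)
  also have "\<dots> = (real k + c) * tl_sum \<beta> n l"
    unfolding p_def p_tl[OF l(1)] c_def by (simp add: algebra_simps)
  finally have sigI: "sigma_l \<beta> n I l \<le> (real k + c) * tl_sum \<beta> n l" .
  have p1: "p 1 = 2 * real h / (real l + 1)"
  proof -
    have "p 1 = (real l * (2 * real h)) / (real l * (real l + 1))" unfolding p_def by (simp add: mult.commute)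
    also have "\<dots> = 2 * real h / (real l + 1)" using lpos by (intro nonzero_mult_divide_mult_cancel_left) simp
    finally show ?thesis .
  qed
  have sz: "size I = k * l + fl 1 + (if 1 \<in> S then 1 else 0)" using pr(2)[OF l(1)] unfolding N_def using l by simp
  have lo: "int (k * l) + \<lfloor>2 * real h / (real l + 1)\<rfloor> \<le> int (size I)"
    using sz flint[of 1] p1 by simp
  have hi: "int (size I) \<le> int (k * l) + \<lceil>2 * real h / (real l + 1)\<rceil>"
  proof (cases "1 \<in> S")
    case True
    then have "fr 1 > 0" using S(3) by auto
    then have "p 1 \<noteq> of_int \<lfloor>p 1\<rfloor>" unfolding fr_def flp by simp
    then have "\<lceil>p 1\<rceil> = \<lfloor>p 1\<rfloor> + 1" by (simp add: ceiling_altdef)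
    then show ?thesis using sz flint[of 1] p1 True by simp
  next
    case False
    then show ?thesis using sz flint[of 1] p1 floor_le_ceiling[of "p 1"] by simp
  qed
  show ?thesis unfolding is_lqset_def c_def[symmetric]
    using pr(1) SigI Sgoal sigI lo hi by (intro exI[of _ I]) auto
qed



lemma part2:
  assumes l: "1 \<le> l" and h: "real h \<le> (real l + 1) / 2"
  shows "\<exists>I. is_lqset \<beta> n l (1 - 2 * real h / (real l * (real l + 1))) I
               \<and> l - 1 \<le> size I \<and> size I \<le> l"
proof -
  define c where "c = 2 * real h / (real l * (real l + 1))"
  define p where "p m = 2 * real h * real (l + 1 - m) / (real l * (real l + 1))" for m
  have lpos: "real l > 0" using l by simp
  have p01: "\<forall>m\<in>{1..l}. 0 \<le> p m \<and> p m \<le> 1"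
  proof
    fix m assume m: "m \<in> {1..l}"
    have "0 \<le> p m" unfolding p_def using lpos by simp
    moreover have "p m \<le> 1"
    proof -
      have D: "0 < real l * (real l + 1)" using lpos by simp
      have "2 * real h * real (l + 1 - m) \<le> real l * (real l + 1)"
      proof -
        have "real (l + 1 - m) \<le> real l" using m by auto
        moreover have "2 * real h \<le> real l + 1" using h by simp
        ultimately have "2 * real h * real (l + 1 - m) \<le> (real l + 1) * real l" by (intro mult_mono) auto
        then show ?thesis by (simp add: mult.commute)
      qed
      then show ?thesis unfolding p_def using divide_le_eq_1_pos[OF D] by simp
    qed
    ultimately show "0 \<le> p m \<and> p m \<le> 1" by simp
  qed
  have sp: "(\<Sum>m\<in>{1..l}. p m) = real h" unfolding p_def using p_sum[OF l] by simp
  obtain S where S: "S \<subseteq> {1..l}" "card S = h"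
      "sum (\<lambda>m. - gg \<beta> n l m) S \<le> (\<Sum>m\<in>{1..l}. p m * (- gg \<beta> n l m))"
    using round_lemma[of "{1..l}" p h "\<lambda>m. - gg \<beta> n l m"] p01 sp by auto
  define N where "N m = (if m \<le> l then (l + 1 - m) - (if m \<in> S then 1 else 0) else 0)" for m
  have Nmono: "\<forall>m. 1 \<le> m \<and> m \<le> l \<longrightarrow> N (Suc m) \<le> N m"
  proof (intro allI impI)
    fix m assume m: "1 \<le> m \<and> m \<le> l"
    show "N (Suc m) \<le> N m"
    proof (cases "Suc m \<le> l")
      case True
      have e: "l + 1 - m = Suc (l + 1 - Suc m)" using True by simp
      have "(l + 1 - Suc m) - (if Suc m \<in> S then 1 else 0) \<le> (l + 1 - m) - (if m \<in> S then 1 else 0)"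
        unfolding e by (auto split: if_splits)
      then show ?thesis unfolding N_def using True m by simp
    next
      case False
      then show ?thesis unfolding N_def by auto
    qed
  qed
  have Ntop: "N (Suc l) = 0" unfolding N_def by simp
  define I where "I = Nset l N"
  note pr = profile[OF Nmono Ntop, folded I_def]
  have rN: "real (N m) = real (l + 1 - m) - (if m \<in> S then 1 else 0)" if "m \<in> {1..l}" for m
    using that unfolding N_def by (auto simp: of_nat_diff)
  have "real (Sig I) = (\<Sum>m\<in>{1..l}. real (l + 1 - m) - (if m \<in> S then 1 else 0))"
    unfolding pr(3) using rN by (intro sum.cong) simp_all
  also have "\<dots> = real l * (real l + 1) / 2 - real h"
  proof -
    have e3: "(\<Sum>m\<in>{1..l}. (if m \<in> S then 1 else 0)) = real (card S)"
      using sum_if_subset[of "{1..l}" S "\<lambda>_. 1"] S(1) by simp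
    show ?thesis unfolding sum_subtractf e3 gauss_real S(2) ..
  qed
  finally have SigI: "real (Sig I) = real l * (real l + 1) / 2 - real h" .
  have ce: "c * (real l * (real l + 1)) = 2 * real h" unfolding c_def using lpos by simp
  have "(1 - c) * real l * (real l + 1) / 2 = real l * (real l + 1) / 2 - (c * (real l * (real l + 1))) / 2"
    by (simp add: field_simps)
  then have Sgoal: "(1 - c) * real l * (real l + 1) / 2 = real l * (real l + 1) / 2 - real h"
    unfolding ce by simp
  have "sigma_l \<beta> n I l = (\<Sum>m\<in>{1..l}. gg \<beta> n l m * real (l + 1 - m) - (if m \<in> S then gg \<beta> n l m else 0))"
    unfolding pr(4)
  proof (intro sum.cong refl)
    fix m assume m: "m \<in> {1..l}"
    show "gg \<beta> n l m * real (N m) = gg \<beta> n l m * real (l + 1 - m) - (if m \<in> S then gg \<beta> n l m else 0)"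
      unfolding rN[OF m] by (simp add: algebra_simps)
  qed
  also have "\<dots> = tl_sum \<beta> n l - sum (gg \<beta> n l) S"
  proof -
    have e3: "(\<Sum>m\<in>{1..l}. (if m \<in> S then gg \<beta> n l m else 0)) = sum (gg \<beta> n l) S"
      using sum_if_subset[of "{1..l}" S "gg \<beta> n l"] S(1) by simp
    show ?thesis unfolding sum_subtractf e3 tl_abel ..
  qed
  also have "\<dots> \<le> tl_sum \<beta> n l - (\<Sum>m\<in>{1..l}. gg \<beta> n l m * p m)"
    using S(3) by (simp add: sum_negf algebra_simps)
  also have "\<dots> = (1 - c) * tl_sum \<beta> n l"
    unfolding p_def p_tl[OF l] c_def by (simp add: algebra_simps)
  finally have sigI: "sigma_l \<beta> n I l \<le> (1 - c) * tl_sum \<beta> n l" .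
  have sz: "size I = l - (if 1 \<in> S then 1 else 0)" using pr(2)[OF l] unfolding N_def using l by simp
  show ?thesis unfolding is_lqset_def c_def[symmetric]
    using pr(1) SigI Sgoal sigI sz by (intro exI[of _ I]) auto
qed


theorem lemma3:
  fixes \<beta> :: "nat \<Rightarrow> real" and n l :: nat
  assumes nonneg: "0 \<le> \<beta> 1"
    and mono: "\<And>i j. 1 \<le> i \<Longrightarrow> i \<le> j \<Longrightarrow> j \<le> n \<Longrightarrow> \<beta> i \<le> \<beta> j"
    and l: "1 \<le> l" "l \<le> n"
  shows
    "(\<forall>d::nat. \<exists>I. is_lqset \<beta> n l (2 * real d / real l) I \<and> size I = 2 * d)
     \<and> (\<forall>h::nat. real h \<le> (real l + 1) / 2 \<longrightarrow>
          (\<exists>I. is_lqset \<beta> n l (1 - 2 * real h / (real l * (real l + 1))) I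
               \<and> l - 1 \<le> size I \<and> size I \<le> l))
     \<and> (\<forall>k::nat. \<forall>h::nat. 1 \<le> k \<longrightarrow> h \<le> l \<longrightarrow>
          (\<exists>I. is_lqset \<beta> n l (real k + 2 * real h / (real l * (real l + 1))) I
               \<and> int (k * l) + \<lfloor>2 * real h / (real l + 1)\<rfloor> \<le> int (size I)
               \<and> int (size I) \<le> int (k * l) + \<lceil>2 * real h / (real l + 1)\<rceil>))
     \<and> (\<forall>d::nat. \<forall>h::nat. 1 \<le> d \<longrightarrow> h \<le> l \<longrightarrow>
          (\<exists>I. is_lqset \<beta> n l (2 * real d / real l + 2 * real h / (real l * (real l + 1))) I
               \<and> size I \<le> 2 * d + 2))
     \<and> (l \<le> n - 1 \<longrightarrow> (\<forall>d::nat. \<exists>I. is_lset l I \<and> size I = 2 * d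
               \<and> real (Sig I) \<ge> real l * real d
               \<and> sigma_l \<beta> n I l \<le> 2 * real d * tl_sum \<beta> n (l + 1) / (real l + 1)))"
  using part1[OF l(1)] part2[OF l(1)] part3[OF l] part4[OF l(1)] part5[OF l(1)]
  by blast

end
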